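(* Let $$C= \begin{pmatrix} -1& 2& 2\\ -2&1& 2\\ -2&2& 3 \end{pmatrix}.$$ For every positive integer $n$, writing $C^n(3,4,5)^\top=(x,y,z)^\top$, the inradius of the triangle with side lengths $x,y,z$ is $2n+1$.
   Context: Triples are regarded as row vectors and $\top$ denotes transpose. The triple $C^n(3,4,5)^\top$ is a primitive Pythagorean triple (positive integers $x,y,z$ with $x^2+y^2=z^2$), so the triangle is a right triangle with hypotenuse $z$. *)

theory Defs
  imports "HOL-Analysis.Analysis"
begin

definition vec3 :: "real \<Rightarrow> real \<Rightarrow> real \<Rightarrow> real ^ 3" where
  "vec3 a b c = (\<chi> i. if i = 1 then a else if i = 2 then b else c)"

definition Cmat :: "real ^ 3 ^ 3" where
  "Cmat = (\<chi> i. if i = 1 then vec3 (-1) 2 2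
                 else if i = 2 then vec3 (-2) 1 2
                 else vec3 (-2) 2 3)"

fun matpow :: "real ^ 'n ^ 'n \<Rightarrow> nat \<Rightarrow> real ^ 'n ^ 'n" where
  "matpow A 0 = mat 1"
| "matpow A (Suc n) = A ** matpow A n"

text \<open>Inradius of a triangle with side lengths a, b, c: area (Heron) divided by semiperimeter.\<close>
definition inradius :: "real \<Rightarrow> real \<Rightarrow> real \<Rightarrow> real" where
  "inradius a b c =
     (let s = (a + b + c) / 2 in sqrt (s * (s - a) * (s - b) * (s - c)) / s)"

end

theory Submission
  imports Defs
begin

lemma vec3_nth: "vec3 a b c $ 1 = a" "vec3 a b c $ 2 = b" "vec3 a b c $ 3 = c"
  by (simp_all add: vec3_def)

lemma Cmat_mul: "Cmat *v vec3 a b c = vec3 (-a+2*b+2*c) (-2*a+b+2*c) (-2*a+2*b+3*c)"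
  unfolding vec_eq_iff
proof
  fix i :: 3
  show "(Cmat *v vec3 a b c) $ i = vec3 (-a+2*b+2*c) (-2*a+b+2*c) (-2*a+2*b+3*c) $ i"
    using exhaust_3[of i]
    by (auto simp add: Cmat_def matrix_vector_mult_def sum_3 vec3_def)
qed

lemma closed: "matpow Cmat n *v vec3 3 4 5 =
   vec3 ((2*real n+1)*(2*real n+3)) (4*(real n+1)) ((2*real n+1)*(2*real n+3)+2)"
proof (induction n)
  case 0
  then show ?case by (simp add: matrix_vector_mul_lid)
next
  case (Suc n)
  have "matpow Cmat (Suc n) *v vec3 3 4 5 = Cmat *v (matpow Cmat n *v vec3 3 4 5)"
    by (simp add: matrix_vector_mul_assoc)
  also have "... = vec3 ((2*real (Suc n)+1)*(2*real (Suc n)+3)) (4*(real (Suc n)+1)) ((2*real (Suc n)+1)*(2*real (Suc n)+3)+2)"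
    unfolding Suc Cmat_mul by (simp add: algebra_simps)
  finally show ?case .
qed

theorem mainTheorem5:
  fixes n :: nat
  assumes "n \<ge> 1"
  shows "let v = matpow Cmat n *v vec3 3 4 5
         in inradius (v $ 1) (v $ 2) (v $ 3) = 2 * real n + 1"
proof -
  define m where "m = real n"
  have m0: "m \<ge> 0" by (simp add: m_def)
  define s where "s = 2*(m+1)*(2*m+3)"
  have sp: "s > 0" using m0 by (simp add: s_def)
  have ss: "((2*m+1)*(2*m+3) + 4*(m+1) + ((2*m+1)*(2*m+3)+2)) / 2 = s"
    by (simp add: s_def field_simps)
  have prod: "s * (s - (2*m+1)*(2*m+3)) * (s - 4*(m+1)) * (s - ((2*m+1)*(2*m+3)+2))
      = power ((2*m+1)* s) 2"
    by (simp add: s_def power2_eq_square algebra_simps)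
  have "sqrt (power ((2*m+1)* s) 2) = (2*m+1) * s" using m0 sp by simp
  then show ?thesis
    unfolding closed Let_def vec3_nth inradius_def m_def[symmetric] ss prod
    using sp by simp
qed

end
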